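(* Let $n\ge 1$, $\lambda_s>0$, $\lambda>0$ and let $n_0\ge 2$. In the line network $L(n_0)$ (with parameter $n$), for every integer $i$ with $1\le i\le \frac{n_0}{2}$ we have $$\Delta^{\ell(n_0)}_{i+1}\le \Delta^{\ell(n_0)}_{i}.$$
   Context: Version-age model. A gossip network on a finite node set $\mathcal N$ is specified by source rates $\lambda_{0j}>0$ ($j\in\mathcal N$) and gossip rates $\lambda_{ij}\ge 0$ for ordered pairs $i\neq j$ in $\mathcal N$ ($\lambda_{ij}$ is the rate at which node $i$ sends updates to node $j$); $\lambda_s>0$ is the source's own update rate. For nonempty $S\subseteq\mathcal N$ let $N(S)=\{i\in\mathcal N\setminus S:\ \sum_{j\in S}\lambda_{ij}>0\}$. The version ages $\Delta_S$ ($\emptyset\neq S\subseteq\mathcal N$) are the numbers defined by $$\Delta_S=\frac{\lambda_s+\sum_{i\in N(S)}\big(\sum_{j\in S}\lambda_{ij}\big)\Delta_{S\cup\{i\}}}{\sum_{j\in S}\lambda_{0j}+\sum_{i\in N(S)}\sum_{j\in S}\lambda_{ij}},$$ which is well defined by downward induction on $|S|$ (all sets on the right are strictly larger than $S$). Write $\Delta_i=\Delta_{\{i\}}$. Line network $L(n_0)$ with parameter $n$: node set $\{1,\dots,n_0\}$, $\lambda_{0j}=\lambda/n$ for all $j$, $\lambda_{i,i+1}=\lambda_{i+1,i}=\lambda/2$ for $1\le i\le n_0-1$, and all other $\lambda_{ij}=0$. $\Delta^{\ell(n_0)}_i$ denotes $\Delta_i$ in this network. *)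

theory Defs
  imports Complex_Main
begin

text \<open>Gossip network: node set N, source rates l0 j, gossip rates l i j (node i to node j),
  source update rate ls.\<close>

definition nbr :: "nat set \<Rightarrow> (nat \<Rightarrow> nat \<Rightarrow> real) \<Rightarrow> nat set \<Rightarrow> nat set" where
  "nbr N l S = {i \<in> N - S. (\<Sum>j\<in>S. l i j) > 0}"

text \<open>Version-age recursion with a fuel argument; fuel (card N - card S + 1) suffices since
  every set on the right-hand side is one element larger (downward induction on |S|).\<close>
fun vage_aux :: "nat set \<Rightarrow> (nat \<Rightarrow> real) \<Rightarrow> (nat \<Rightarrow> nat \<Rightarrow> real) \<Rightarrow> real \<Rightarrow> nat \<Rightarrow> nat set \<Rightarrow> real" where
  "vage_aux N l0 l ls 0 S = 0"
| "vage_aux N l0 l ls (Suc k) S =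
     (ls + (\<Sum>i\<in>nbr N l S. (\<Sum>j\<in>S. l i j) * vage_aux N l0 l ls k (insert i S)))
     / ((\<Sum>j\<in>S. l0 j) + (\<Sum>i\<in>nbr N l S. \<Sum>j\<in>S. l i j))"

definition vage :: "nat set \<Rightarrow> (nat \<Rightarrow> real) \<Rightarrow> (nat \<Rightarrow> nat \<Rightarrow> real) \<Rightarrow> real \<Rightarrow> nat set \<Rightarrow> real" where
  "vage N l0 l ls S = vage_aux N l0 l ls (card N - card S + 1) S"

definition line_nodes :: "nat \<Rightarrow> nat set" where
  "line_nodes n0 = {1..n0}"

definition line_src :: "nat \<Rightarrow> real \<Rightarrow> nat \<Rightarrow> real" where
  "line_src n lam j = lam / real n"

definition line_gossip :: "real \<Rightarrow> nat \<Rightarrow> nat \<Rightarrow> real" where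
  "line_gossip lam i j = (if j = i + 1 \<or> i = j + 1 then lam / 2 else 0)"

definition line_age :: "nat \<Rightarrow> nat \<Rightarrow> real \<Rightarrow> real \<Rightarrow> nat \<Rightarrow> real" where
  "line_age n0 n lam ls i =
     vage (line_nodes n0) (line_src n lam) (line_gossip lam) ls {i}"

end

theory Submission
  imports Defs
begin


lemma vage_rec:
  assumes "finite N" "S \<subseteq> N"
  shows "vage N l0 l ls S = (ls + (\<Sum>i\<in>nbr N l S. (\<Sum>j\<in>S. l i j) * vage N l0 l ls (insert i S)))
     / ((\<Sum>j\<in>S. l0 j) + (\<Sum>i\<in>nbr N l S. \<Sum>j\<in>S. l i j))"
proof -
  have fS: "finite S" using assms finite_subset by blast
  have "(\<Sum>i\<in>nbr N l S. (\<Sum>j\<in>S. l i j) * vage_aux N l0 l ls (card N - card S) (insert i S))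
      = (\<Sum>i\<in>nbr N l S. (\<Sum>j\<in>S. l i j) * vage N l0 l ls (insert i S))"
  proof (rule sum.cong)
    fix i assume "i \<in> nbr N l S"
    then have i: "i \<in> N" "i \<notin> S" by (auto simp: nbr_def)
    have "S \<subset> N" using i assms by blast
    then have "card S < card N" using assms psubset_card_mono by blast
    moreover have "card (insert i S) = Suc (card S)" using i fS by simp
    ultimately have "card N - card (insert i S) + 1 = card N - card S" by simp
    then show "(\<Sum>j\<in>S. l i j) * vage_aux N l0 l ls (card N - card S) (insert i S)
      = (\<Sum>j\<in>S. l i j) * vage N l0 l ls (insert i S)" by (simp add: vage_def)
  qed simp
  then show ?thesis by (simp add: vage_def)
qed




lemma gsum:
  assumes "a \<le> b" "i \<notin> {a..b}"
  shows "(\<Sum>j\<in>{a..b}. line_gossip lam i j) = (if i+1=a \<or> i=b+1 then lam/2 else 0)"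
proof -
  have "(\<Sum>j\<in>{a..b}. line_gossip lam i j) = (\<Sum>j\<in>{a..b}\<inter>{j. j = i+1 \<or> i = j+1}. lam/2)"
    unfolding line_gossip_def by (simp add: sum.If_cases)
  also have "{a..b}\<inter>{j. j = i+1 \<or> i = j+1} = (if i+1=a then {a} else if i=b+1 then {b} else {})"
    using assms by auto
  finally show ?thesis using assms by auto
qed

lemma nbr_int:
  assumes "lam > 0" "1 \<le> a" "a \<le> b" "b \<le> n0"
  shows "nbr {1..n0} (line_gossip lam) {a..b} = (if 1<a then {a-1} else {}) \<union> (if b<n0 then {b+1} else {})"
  unfolding nbr_def using assms gsum[OF assms(3)] 
  apply (auto split: if_splits)
  done

lemma int_rec:
  assumes "lam > 0" "1 \<le> a" "a \<le> b" "b \<le> n0"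
  shows "vage {1..n0} (line_src n lam) (line_gossip lam) ls {a..b} =
   (ls + (if 1<a then lam/2 * vage {1..n0} (line_src n lam) (line_gossip lam) ls {a-1..b} else 0)
       + (if b<n0 then lam/2 * vage {1..n0} (line_src n lam) (line_gossip lam) ls {a..b+1} else 0))
   / (real (b+1-a) * lam / real n + (if 1<a then lam/2 else 0) + (if b<n0 then lam/2 else 0))"
proof -
  have s1: "(\<Sum>j\<in>{a..b}. line_src n lam j) = real (b+1-a) * lam / real n"
    by (simp add: line_src_def)
  have i1: "insert (a-1) {a..b} = {a-1..b}" if "1<a" using that assms by auto
  have i2: "insert (b+1) {a..b} = {a..b+1}" using assms by auto
  have g1: "sum (line_gossip lam (a - Suc 0)) {a..b} = lam/2" if "1<a"
    using gsum[OF assms(3), of "a-1" lam] that by auto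
  have g2: "sum (line_gossip lam (Suc b)) {a..b} = lam/2"
    using gsum[OF assms(3), of "b+1" lam] by auto
  have ne: "a - 1 \<noteq> b + 1" using assms by auto
  show ?thesis
    apply (subst vage_rec)
    using assms apply auto[2]
    apply (subst nbr_int[OF assms])+
    using ne by (auto simp: s1 i1[simplified] i2[simplified] g1 g2 algebra_simps)
qed




definition G :: "nat \<Rightarrow> nat \<Rightarrow> real \<Rightarrow> real \<Rightarrow> nat \<Rightarrow> nat \<Rightarrow> real" where
  "G n0 n lam ls L R = vage {1..n0} (line_src n lam) (line_gossip lam) ls {L+1..n0-R}"

lemma G_rec:
  assumes "lam > 0" "L + R < n0"
  shows "G n0 n lam ls L R =
   (ls + (if 0<L then lam/2 * G n0 n lam ls (L-1) R else 0)
       + (if 0<R then lam/2 * G n0 n lam ls L (R-1) else 0))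
   / (real (n0-L-R) * lam / real n + (if 0<L then lam/2 else 0) + (if 0<R then lam/2 else 0))"
proof -
  have e1: "L - 1 + 1 = L" if "0<L" using that by simp
  have e2: "n0 - (R - 1) = n0 - R + 1" if "0<R" using that assms by simp
  have e3: "n0 - R + 1 - (L + 1) = n0 - L - R" by simp
  show ?thesis
    unfolding G_def
    apply (subst int_rec[OF assms(1)])
    using assms apply auto[3]
    using assms by (auto simp: e1 e2 e3 Suc_diff_le)
qed

lemma G_pos:
  assumes "lam > 0" "ls > 0" "n \<ge> 1" "L + R < n0"
  shows "G n0 n lam ls L R > 0"
  using assms(4)
proof (induction "L+R" arbitrary: L R rule: less_induct)
  case less
  have "real (n0-L-R) > 0" using less.prems by simp
  then have d: "real (n0-L-R) * lam / real n > 0" using assms by simp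
  have p1: "(if 0<L then lam/2 * G n0 n lam ls (L-1) R else 0) \<ge> 0"
    using less.hyps[of "L-1" R] less.prems assms by (auto intro: less_imp_le)
  have p2: "(if 0<R then lam/2 * G n0 n lam ls L (R-1) else 0) \<ge> 0"
    using less.hyps[of L "R-1"] less.prems assms by (auto intro: less_imp_le)
  have "(real (n0-L-R) * lam / real n + (if 0<L then lam/2 else 0) + (if 0<R then lam/2 else 0)) > 0"
    using d by (intro add_pos_nonneg) (use assms less.prems in \<open>auto simp: of_nat_diff\<close>)
  moreover have "ls + (if 0<L then lam/2 * G n0 n lam ls (L-1) R else 0)
       + (if 0<R then lam/2 * G n0 n lam ls L (R-1) else 0) > 0" using p1 p2 assms by linarith
  ultimately show ?case by (subst G_rec[OF assms(1) less.prems]) simp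
qed

lemma G_sym:
  assumes "lam > 0" "L + R < n0"
  shows "G n0 n lam ls L R = G n0 n lam ls R L"
  using assms(2)
proof (induction "L+R" arbitrary: L R rule: less_induct)
  case less
  have a: "G n0 n lam ls (L-1) R = G n0 n lam ls R (L-1)" if "0<L"
    using less.hyps[of "L-1" R] less.prems that by auto
  have b: "G n0 n lam ls L (R-1) = G n0 n lam ls (R-1) L" if "0<R"
    using less.hyps[of L "R-1"] less.prems that by auto
  have c: "n0 - L - R = n0 - R - L" by simp
  note l = G_rec[OF assms(1) less.prems]
  note r = G_rec[OF assms(1), of R L]
  show ?case
    apply (rule trans[OF l])
    apply (rule sym, rule trans[OF r])
    using less.prems apply simp
    using a b less.prems by (cases "0<L"; cases "0<R"; simp add: c add.commute)
qed




lemma G_mono: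
  assumes lp: "lam > 0" and "ls > 0" "n \<ge> 1" "L + Suc r < n0"
  shows "G n0 n lam ls L r \<le> G n0 n lam ls L (Suc r)"
  using assms(4)
proof (induction "L+r" arbitrary: L r rule: less_induct)
  case less
  define X where "X = G n0 n lam ls L r"
  define Y where "Y = G n0 n lam ls L (Suc r)"
  define c where "c = real (n0-L-Suc r) * lam / real n"
  define c' where "c' = real (n0-L-r) * lam / real n"
  define hL where "hL = (if 0<L then lam/2 else 0)"
  define hr where "hr = (if 0<r then lam/2 else 0)"
  define A where "A = (if 0<L then lam/2 * G n0 n lam ls (L-1) r else 0)"
  define A' where "A' = (if 0<L then lam/2 * G n0 n lam ls (L-1) (Suc r) else 0)"
  define B where "B = (if 0<r then lam/2 * G n0 n lam ls L (r-1) else 0)"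
  have eX: "X = (ls + A + B)/(c'+hL+hr)"
    unfolding X_def A_def B_def c'_def hL_def hr_def
    using G_rec[OF lp, of L r] less.prems by simp
  have eY: "Y = (ls + A' + lam/2*X)/(c+hL+lam/2)"
    unfolding Y_def A'_def X_def c_def hL_def
    using G_rec[OF lp, of L "Suc r"] less.prems by simp
  have cpos: "c > 0" unfolding c_def using less.prems assms by simp
  have cc: "c \<le> c'" unfolding c_def c'_def using assms less.prems
    by (intro divide_right_mono mult_right_mono) auto
  have hL0: "hL \<ge> 0" and hr0: "hr \<ge> 0" unfolding hL_def hr_def using lp by auto
  have X0: "X > 0" unfolding X_def using G_pos[OF lp assms(2,3)] less.prems by simp
  have AA: "A \<le> A'" unfolding A_def A'_def
    using less.hyps[of "L-1" r] less.prems lp by auto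
  have BX: "B \<le> X*hr" unfolding B_def X_def hr_def
    using less.hyps[of L "r-1"] less.prems lp by auto
  have d1: "c'+hL+hr > 0" using cpos cc hL0 hr0 by linarith
  have d2: "c+hL+lam/2 > 0" using cpos hL0 lp by linarith
  have e1: "X*(c'+hL+hr) = ls + A + B" using eX d1 by (simp add: field_simps)
  have xc: "X*c \<le> X*c'" using cc X0 by (simp add: mult_left_mono)
  have "X*(c+hL+lam/2) \<le> ls + A' + lam/2*X"
    using e1 xc AA BX by (simp add: algebra_simps)
  then have "X \<le> Y" unfolding eY using d2 by (simp add: le_divide_eq)
  then show ?case unfolding X_def Y_def .
qed

lemma G_bal:
  assumes lp: "lam > 0" and "ls > 0" "n \<ge> 1" "L + Suc r < n0" "L \<le> r"
  shows "G n0 n lam ls (Suc L) r \<le> G n0 n lam ls L (Suc r)"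
  using assms(4,5)
proof (induction "L+r" arbitrary: L r rule: less_induct)
  case less
  show ?case
  proof (cases "L = r")
    case True
    then show ?thesis using G_sym[OF lp, of "Suc L" L n0 n ls] less.prems by simp
  next
    case False
    then have Lr: "L < r" using less.prems by simp
    then obtain q where q: "r = Suc q" by (cases r) auto
    define c where "c = real (n0-L-Suc r) * lam / real n"
    have cpos: "c > 0" unfolding c_def using less.prems assms by simp
    have IH1: "G n0 n lam ls (Suc L) q \<le> G n0 n lam ls L r"
      using less.hyps[of L q] less.prems Lr q by simp
    show ?thesis
    proof (cases "L = 0")
      case L0: False
      have IH2: "G n0 n lam ls L r \<le> G n0 n lam ls (L-1) (Suc r)"
        using less.hyps[of "L-1" r] less.prems L0 by simp
      have eA: "G n0 n lam ls L (Suc r) = (ls + lam/2 * G n0 n lam ls (L-1) (Suc r)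
          + lam/2 * G n0 n lam ls L r) / (c + lam/2 + lam/2)"
        using G_rec[OF lp, of L "Suc r"] less.prems L0 unfolding c_def by simp
      have eB: "G n0 n lam ls (Suc L) r = (ls + lam/2 * G n0 n lam ls L r
          + lam/2 * G n0 n lam ls (Suc L) q) / (c + lam/2 + lam/2)"
        using G_rec[OF lp, of "Suc L" r] less.prems q unfolding c_def by simp
      have "lam/2 * G n0 n lam ls (Suc L) q \<le> lam/2 * G n0 n lam ls (L-1) (Suc r)"
        using IH1 IH2 lp by simp
      then show ?thesis unfolding eA eB using cpos lp
        by (intro divide_right_mono) auto
    next
      case L0: True
      have M: "G n0 n lam ls 0 r \<le> G n0 n lam ls 0 (Suc r)"
        using G_mono[OF lp assms(2,3)] less.prems L0 by simp
      define A where "A = G n0 n lam ls 0 (Suc r)"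
      have eA: "A = (ls + lam/2 * G n0 n lam ls 0 r) / (c + lam/2)"
        using G_rec[OF lp, of 0 "Suc r"] less.prems L0 unfolding c_def A_def by simp
      have eB: "G n0 n lam ls 1 r = (ls + lam/2 * G n0 n lam ls 0 r
          + lam/2 * G n0 n lam ls 1 q) / (c + lam/2 + lam/2)"
        using G_rec[OF lp, of 1 r] less.prems q L0 unfolding c_def by simp
      have d: "c + lam/2 > 0" using cpos lp by linarith
      have e1: "A*(c+lam/2) = ls + lam/2 * G n0 n lam ls 0 r" using eA d by (simp add: field_simps)
      have "G n0 n lam ls 1 q \<le> A" using IH1 M L0 unfolding A_def by simp
      then have "lam/2 * G n0 n lam ls 1 q \<le> lam/2 * A" using lp by simp
      then have "ls + lam/2 * G n0 n lam ls 0 r + lam/2 * G n0 n lam ls 1 q \<le> A * (c + lam/2 + lam/2)"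
        using e1 by (simp add: algebra_simps)
      then have "G n0 n lam ls 1 r \<le> A" unfolding eB using d lp by (simp add: divide_le_eq)
      then show ?thesis using L0 unfolding A_def by simp
    qed
  qed
qed


theorem theorem1:
  fixes n n0 i :: nat and ls lam :: real
  assumes "n \<ge> 1" and "ls > 0" and "lam > 0" and "n0 \<ge> 2"
    and "1 \<le> i" and "real i \<le> real n0 / 2"
  shows "line_age n0 n lam ls (i + 1) \<le> line_age n0 n lam ls i"
proof -
  have h2: "2 * i \<le> n0" using assms(6) by linarith
  have a1: "line_age n0 n lam ls i = G n0 n lam ls (i-1) (Suc (n0-i-1))"
    unfolding line_age_def G_def line_nodes_def using assms(5) h2 by simp
  have a2: "line_age n0 n lam ls (i+1) = G n0 n lam ls (Suc (i-1)) (n0-i-1)"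
    unfolding line_age_def G_def line_nodes_def using assms(5) h2 by simp
  have "G n0 n lam ls (Suc (i-1)) (n0-i-1) \<le> G n0 n lam ls (i-1) (Suc (n0-i-1))"
    by (rule G_bal[OF assms(3,2,1)]) (use assms(5) h2 in auto)
  then show ?thesis unfolding a1 a2 .
qed

end
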